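(* Let $m\geq 2$. Up to isomorphism, $\operatorname{Turan}(2m+2, m+1)$ is the unique connected graph with parameters $\bigl(2m, 4\binom{m}{2}\bigr)$.
   Context: All graphs are finite, simple and undirected. The $K_3$-degree of a vertex $v$ is the number of triangles containing $v$. A graph $G$ has parameters $(r_2,r_3)$ if every vertex has degree $r_2$ and every vertex has $K_3$-degree $r_3$. For $r\mid n$, $\operatorname{Turan}(n,r)$ is the complete multipartite graph on $n$ vertices with $r$ parts each of size $n/r$; thus $\operatorname{Turan}(2m+2,m+1)$ is the complete multipartite graph with $m+1$ parts of size $2$. *)

theory Defs
  imports Main
begin

definition simple_graph :: "'a set \<Rightarrow> ('a \<Rightarrow> 'a \<Rightarrow> bool) \<Rightarrow> bool" where
  "simple_graph V E \<longleftrightarrow> finite V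
     \<and> (\<forall>x y. E x y \<longrightarrow> x \<in> V \<and> y \<in> V)
     \<and> (\<forall>x y. E x y \<longrightarrow> E y x)
     \<and> (\<forall>x. \<not> E x x)"

definition degree :: "'a set \<Rightarrow> ('a \<Rightarrow> 'a \<Rightarrow> bool) \<Rightarrow> 'a \<Rightarrow> nat" where
  "degree V E v = card {u \<in> V. E v u}"

definition triangles :: "'a set \<Rightarrow> ('a \<Rightarrow> 'a \<Rightarrow> bool) \<Rightarrow> 'a set set" where
  "triangles V E = {T. T \<subseteq> V \<and> card T = 3 \<and> (\<forall>x\<in>T. \<forall>y\<in>T. x \<noteq> y \<longrightarrow> E x y)}"

definition k3_degree :: "'a set \<Rightarrow> ('a \<Rightarrow> 'a \<Rightarrow> bool) \<Rightarrow> 'a \<Rightarrow> nat" where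
  "k3_degree V E v = card {T \<in> triangles V E. v \<in> T}"

definition has_parameters :: "'a set \<Rightarrow> ('a \<Rightarrow> 'a \<Rightarrow> bool) \<Rightarrow> nat \<Rightarrow> nat \<Rightarrow> bool" where
  "has_parameters V E r2 r3 \<longleftrightarrow>
     (\<forall>v\<in>V. degree V E v = r2 \<and> k3_degree V E v = r3)"

definition connected_graph :: "'a set \<Rightarrow> ('a \<Rightarrow> 'a \<Rightarrow> bool) \<Rightarrow> bool" where
  "connected_graph V E \<longleftrightarrow> V \<noteq> {} \<and> (\<forall>x\<in>V. \<forall>y\<in>V. E\<^sup>*\<^sup>* x y)"

definition graph_iso ::
  "'a set \<Rightarrow> ('a \<Rightarrow> 'a \<Rightarrow> bool) \<Rightarrow> 'b set \<Rightarrow> ('b \<Rightarrow> 'b \<Rightarrow> bool) \<Rightarrow> bool" where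
  "graph_iso V E W F \<longleftrightarrow>
     (\<exists>f. bij_betw f V W \<and> (\<forall>x\<in>V. \<forall>y\<in>V. E x y \<longleftrightarrow> F (f x) (f y)))"

text \<open>Turan(n,r) for r dividing n: vertices 0..n-1, parts are residue classes mod r
(each of size n/r); two vertices adjacent iff they lie in different parts.\<close>

definition turan_V :: "nat \<Rightarrow> nat \<Rightarrow> nat set" where
  "turan_V n r = {0..<n}"

definition turan_E :: "nat \<Rightarrow> nat \<Rightarrow> nat \<Rightarrow> nat \<Rightarrow> bool" where
  "turan_E n r x y \<longleftrightarrow> x < n \<and> y < n \<and> x mod r \<noteq> y mod r"

end

theory Submission
  imports Defs
begin


definition nb :: "'a set \<Rightarrow> ('a \<Rightarrow> 'a \<Rightarrow> bool) \<Rightarrow> 'a \<Rightarrow> 'a set" where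
  "nb V E x = {u \<in> V. E x u}"

lemma sg_facts:
  assumes "simple_graph V E" "E x y"
  shows "x \<in> V" "y \<in> V" "x \<noteq> y" "E y x"
  using assms unfolding simple_graph_def by metis+

lemma triangle_count:
  assumes sg: "simple_graph V E" and v: "v \<in> V"
  shows "2 * k3_degree V E v = (\<Sum>u\<in>nb V E v. card (nb V E v \<inter> nb V E u))"
proof -
  have fV: "finite V" using sg simple_graph_def by blast
  define P where "P = (SIGMA u: nb V E v. nb V E v \<inter> nb V E u)"
  define Tv where "Tv = {T \<in> triangles V E. v \<in> T}"
  define g where "g = (\<lambda>(u,w). {v,u,w})"
  have fin_nb: "\<And>x. finite (nb V E x)" using fV unfolding nb_def by auto
  have fP: "finite P" unfolding P_def using fin_nb by auto
  have fT: "finite Tv" unfolding Tv_def triangles_def using fV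
    by (rule_tac finite_subset[of _ "Pow V"]) auto
  have cardP: "card P = (\<Sum>u\<in>nb V E v. card (nb V E v \<inter> nb V E u))"
    unfolding P_def using fin_nb by simp
  have gP: "g ` P \<subseteq> Tv"
  proof
    fix T assume "T \<in> g ` P"
    then obtain u w where uw: "(u,w) \<in> P" "T = {v,u,w}" unfolding g_def by auto
    hence h: "u \<in> V" "w \<in> V" "E v u" "E v w" "E u w" unfolding P_def nb_def by auto
    have d: "u \<noteq> v" "w \<noteq> v" "u \<noteq> w" using sg_facts[OF sg] h by metis+
    have "card {v,u,w} = 3" using d by auto
    moreover have "\<forall>x\<in>{v,u,w}. \<forall>y\<in>{v,u,w}. x \<noteq> y \<longrightarrow> E x y"
      using h sg_facts[OF sg] by auto
    ultimately show "T \<in> Tv" unfolding Tv_def triangles_def using uw h v by auto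
  qed
  have fib: "card {p \<in> P. g p = T} = 2" if "T \<in> Tv" for T
  proof -
    have T: "T \<subseteq> V" "card T = 3" "v \<in> T" "\<forall>x\<in>T. \<forall>y\<in>T. x \<noteq> y \<longrightarrow> E x y"
      using that unfolding Tv_def triangles_def by auto
    have "card (T - {v}) = 2" using T by (simp add: card_Diff_singleton)
    then obtain a b where ab: "T - {v} = {a,b}" "a \<noteq> b" by (auto simp: card_2_iff)
    have abT: "a \<in> T" "b \<in> T" "a \<noteq> v" "b \<noteq> v" using ab by auto
    have Teq: "T = {v,a,b}" using ab T by auto
    have "{p \<in> P. g p = T} = {(a,b),(b,a)}"
    proof (intro equalityI subsetI)
      fix p assume p: "p \<in> {p \<in> P. g p = T}"
      obtain u w where puw: "p = (u,w)" by (cases p)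
      hence h: "u \<in> V" "w \<in> V" "E v u" "E v w" "E u w" "{v,u,w} = T"
        using p unfolding P_def nb_def g_def by auto
      have d: "u \<noteq> v" "w \<noteq> v" "u \<noteq> w" using sg_facts[OF sg] h by metis+
      have "u \<in> {a,b}" "w \<in> {a,b}" using h(6) d ab by blast+
      thus "p \<in> {(a,b),(b,a)}" using d puw by auto
    next
      fix p assume "p \<in> {(a,b),(b,a)}"
      moreover have "E v a" "E v b" "E a b" "E b a" using T abT ab by auto
      ultimately show "p \<in> {p \<in> P. g p = T}" using T abT Teq
        unfolding P_def nb_def g_def by auto
    qed
    thus ?thesis using ab by simp
  qed
  have "card P = (\<Sum>T\<in>Tv. card {p \<in> P. g p = T})"
    using sum.group[OF fP fT gP, of "\<lambda>_. 1::nat"] by simp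
  also have "\<dots> = 2 * card Tv" using fib by simp
  finally show ?thesis using cardP unfolding k3_degree_def Tv_def by simp
qed



definition cocktail :: "'a set \<Rightarrow> ('a \<Rightarrow> 'a \<Rightarrow> bool) \<Rightarrow> ('a \<Rightarrow> 'a) \<Rightarrow> nat \<Rightarrow> bool" where
  "cocktail V E q r \<longleftrightarrow> finite V \<and> card V = 2*r \<and> (\<forall>x\<in>V. q x \<in> V \<and> q x \<noteq> x \<and> q (q x) = x)
     \<and> (\<forall>x y. E x y \<longleftrightarrow> x \<in> V \<and> y \<in> V \<and> x \<noteq> y \<and> y \<noteq> q x)"

lemma cocktail_simple: "cocktail V E q r \<Longrightarrow> simple_graph V E"
  unfolding cocktail_def simple_graph_def by metis

lemma cocktail_nb: assumes "cocktail V E q r" "x \<in> V"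
  shows "nb V E x = V - {x, q x}"
  using assms unfolding cocktail_def nb_def by auto

lemma cocktail_deg: assumes c: "cocktail V E q r" and x: "x \<in> V"
  shows "card (nb V E x) = 2*r - 2"
proof -
  have h: "finite V" "card V = 2*r" "q x \<in> V" "q x \<noteq> x" using c x unfolding cocktail_def by auto
  have "card (V - {x, q x}) = card V - card {x, q x}"
    using h x by (intro card_Diff_subset) auto
  thus ?thesis using cocktail_nb[OF c x] h by simp
qed

lemma cocktail_common: assumes c: "cocktail V E q r" and x: "x \<in> V" and u: "u \<in> nb V E x"
  shows "card (nb V E x \<inter> nb V E u) = 2*r - 4"
proof -
  have h: "finite V" "card V = 2*r" "\<forall>x\<in>V. q x \<in> V \<and> q x \<noteq> x \<and> q (q x) = x"
    using c unfolding cocktail_def by auto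
  have uV: "u \<in> V" "u \<noteq> x" "u \<noteq> q x" using u cocktail_nb[OF c x] by auto
  have d: "q u \<noteq> x" "q u \<noteq> q x" using uV h x by metis+
  have eq: "nb V E x \<inter> nb V E u = V - {x, q x, u, q u}"
    using cocktail_nb[OF c x] cocktail_nb[OF c uV(1)] by auto
  have d2: "q u \<noteq> u" "q x \<noteq> x" using h uV x by auto
  have c4: "card {x, q x, u, q u} = 4" using d d2 uV by auto
  have "card (V - {x, q x, u, q u}) = card V - card {x, q x, u, q u}"
    using h x uV by (intro card_Diff_subset) auto
  thus ?thesis using eq c4 h by simp
qed

lemma cocktail_params: assumes c: "cocktail V E q (m+1)"
  shows "has_parameters V E (2*m) (4 * (m choose 2))"
  unfolding has_parameters_def
proof (intro ballI conjI)
  fix x assume x: "x \<in> V"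
  show "degree V E x = 2*m" using cocktail_deg[OF c x] unfolding degree_def nb_def by simp
  have "2 * k3_degree V E x = (\<Sum>u\<in>nb V E x. card (nb V E x \<inter> nb V E u))"
    using triangle_count[OF cocktail_simple[OF c] x] .
  also have "\<dots> = (\<Sum>u\<in>nb V E x. 2*m - 2)" using cocktail_common[OF c x] by simp
  also have "\<dots> = 2*m*(2*m-2)" using cocktail_deg[OF c x] by simp
  finally have k: "2 * k3_degree V E x = 2*m*(2*m-2)" .
  have ev: "even (m*(m-1))" by auto
  have "4 * (m choose 2) = 2*(m*(m-1))"
    unfolding choose_two using ev by (metis dvd_mult_div_cancel mult.assoc numeral_Bit0_eq_double mult_2)
  thus "k3_degree V E x = 4 * (m choose 2)" using k by (simp add: algebra_simps right_diff_distrib')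
qed

lemma cocktail_connected: assumes c: "cocktail V E q r" and r: "r \<ge> 2"
  shows "connected_graph V E"
proof -
  have h: "finite V" "card V = 2*r" "\<forall>x\<in>V. q x \<in> V \<and> q x \<noteq> x \<and> q (q x) = x"
     and E: "\<And>x y. E x y \<longleftrightarrow> x \<in> V \<and> y \<in> V \<and> x \<noteq> y \<and> y \<noteq> q x"
    using c unfolding cocktail_def by auto
  have ne: "V \<noteq> {}" using h r by auto
  have "E\<^sup>*\<^sup>* x y" if x: "x \<in> V" and y: "y \<in> V" for x y
  proof (cases "E x y \<or> x = y")
    case True thus ?thesis by auto
  next
    case False
    hence yq: "y = q x" using E x y by auto
    have "card {x, q x} \<le> 2" by (simp add: card_insert_le_m1)
    hence "card (V - {x, q x}) > 0" using h r x by (subst card_Diff_subset) auto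
    then obtain z where z: "z \<in> V" "z \<noteq> x" "z \<noteq> q x" by (metis card_gt_0_iff Diff_iff insertCI ex_in_conv)
    have "q z \<noteq> q x" using z h x by metis
    hence "E x z" "E z y" using E z x y yq h by auto
    thus ?thesis by (meson converse_rtranclp_into_rtranclp r_into_rtranclp)
  qed
  thus ?thesis using ne unfolding connected_graph_def by auto
qed



lemma mod_r_cases: fixes x r :: nat assumes "x < 2*r"
  shows "x mod r = (if x < r then x else x - r)" "(x + r) mod (2*r) = (if x < r then x + r else x - r)"
proof -
  show "x mod r = (if x < r then x else x - r)"
    using assms by (auto simp: le_mod_geq)
  show "(x + r) mod (2*r) = (if x < r then x + r else x - r)"
  proof (cases "x < r")
    case True thus ?thesis by simp
  next
    case False
    hence "(x + r) mod (2*r) = (x + r - 2*r) mod (2*r)" using assms by (subst le_mod_geq) auto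
    also have "\<dots> = x - r" using assms False by simp
    finally show ?thesis using False by simp
  qed
qed

lemma turan_cocktail: assumes r: "r \<ge> 1" and n: "n = 2*r"
  shows "cocktail (turan_V n r) (turan_E n r) (\<lambda>i. (i + r) mod n) r"
  unfolding cocktail_def turan_V_def n
proof (intro conjI allI ballI)
  show "finite {0..<2*r}" by simp
  show "card {0..<2*r} = 2*r" by simp
  fix x assume x: "x \<in> {0..<2*r}"
  hence x': "x < 2*r" by simp
  show "(x + r) mod (2 * r) \<in> {0..<2 * r}" using r by simp
  show "(x + r) mod (2 * r) \<noteq> x" using mod_r_cases[OF x'] r by auto
  show "((x + r) mod (2 * r) + r) mod (2 * r) = x"
    using mod_r_cases[OF x'] mod_r_cases(2)[of "(x + r) mod (2 * r)" r] r x' by auto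
next
  fix x y
  show "turan_E (2 * r) r x y = (x \<in> {0..<2 * r} \<and> y \<in> {0..<2 * r} \<and> x \<noteq> y \<and> y \<noteq> (x + r) mod (2 * r))"
  proof (cases "x < 2*r \<and> y < 2*r")
    case True
    hence a: "x < 2*r" "y < 2*r" by auto
    have "x mod r \<noteq> y mod r \<longleftrightarrow> x \<noteq> y \<and> y \<noteq> (x + r) mod (2 * r)"
      using mod_r_cases[OF a(1)] mod_r_cases[OF a(2)] a
      by (cases "x < r"; cases "y < r"; simp; linarith)
    thus ?thesis unfolding turan_E_def using a by auto
  next
    case False thus ?thesis unfolding turan_E_def by auto
  qed
qed



lemma cocktail_iso: assumes c: "cocktail V E q r" and r: "r \<ge> 1"
  shows "graph_iso V E {0..<2*r} (turan_E (2*r) r)"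
proof -
  have h: "finite V" "card V = 2*r" "\<And>x. x\<in>V \<Longrightarrow> q x \<in> V \<and> q x \<noteq> x \<and> q (q x) = x"
     and E: "\<And>x y. E x y \<longleftrightarrow> x \<in> V \<and> y \<in> V \<and> x \<noteq> y \<and> y \<noteq> q x"
    using c unfolding cocktail_def by auto
  obtain g where g: "bij_betw g V {0..<card V}" using ex_bij_betw_finite_nat[OF h(1)] by blast
  have ginj: "inj_on g V" using g bij_betw_def by blast
  define R where "R = {x \<in> V. g x < g (q x)}"
  have RV: "R \<subseteq> V" unfolding R_def by auto
  have qR: "q x \<in> R" if "x \<in> V" "x \<notin> R" for x
  proof -
    have "g x \<noteq> g (q x)" using ginj h(3)[OF that(1)] that(1) by (metis inj_on_eq_iff)
    thus ?thesis using that h(3)[OF that(1)] unfolding R_def by auto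
  qed
  have qnR: "q x \<notin> R" if "x \<in> R" for x
    using that h(3)[of x] unfolding R_def by auto
  have Vsplit: "V = R \<union> q ` R" using qR qnR h(3) RV
    by (auto, metis image_eqI) 
  have disj: "R \<inter> q ` R = {}" using qnR by auto
  have qinj: "inj_on q R" using h(3) RV by (metis inj_onI subsetD)
  have fR: "finite R" using RV h(1) finite_subset by blast
  have "card (R \<union> q ` R) = card R + card (q ` R)" using fR disj by (intro card_Un_disjoint) auto
  hence "card V = card R + card (q ` R)" using Vsplit by simp
  hence cR: "card R = r" using card_image[OF qinj] h(2) by simp
  obtain hh where hh: "bij_betw hh R {0..<r}" using ex_bij_betw_finite_nat[OF fR] cR by auto
  have hinj: "inj_on hh R" using hh bij_betw_imp_inj_on by blast
  have hR: "\<And>x. x \<in> R \<Longrightarrow> hh x < r" using bij_betw_imp_surj_on[OF hh] by auto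
  define rep where "rep x = (if x \<in> R then x else q x)" for x
  have repR: "rep x \<in> R" if "x \<in> V" for x using qR that unfolding rep_def by auto
  define f where "f x = (if x \<in> R then hh x else hh (q x) + r)" for x
  have fmod: "f x mod r = hh (rep x)" "f x < 2*r" if "x \<in> V" for x
    using hR[OF repR[OF that]] unfolding f_def rep_def by auto
  have rep_eq: "rep x = rep y \<longleftrightarrow> y = x \<or> y = q x" if "x \<in> V" "y \<in> V" for x y
    using that h(3) qR qnR unfolding rep_def by metis
  have finj: "inj_on f V"
  proof (rule inj_onI)
    fix x y assume xy: "x \<in> V" "y \<in> V" "f x = f y"
    have "hh (rep x) = hh (rep y)" using fmod xy by metis
    hence "rep x = rep y" using hinj repR xy by (meson inj_on_eq_iff)
    hence "y = x \<or> y = q x" using rep_eq xy by blast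
    moreover have "x \<in> R \<longleftrightarrow> y \<in> R" using xy hR unfolding f_def
      by (metis add_lessD1 less_not_refl2 not_add_less2 qR)
    ultimately show "x = y" using qnR qR xy by metis
  qed
  have fim: "f ` V = {0..<2*r}"
    using fmod(2) finj h(2) by (intro card_subset_eq) (auto simp: card_image)
  have bij: "bij_betw f V {0..<2*r}" using finj fim bij_betw_def by blast
  show ?thesis unfolding graph_iso_def
  proof (intro exI conjI ballI)
    show "bij_betw f V {0..<2*r}" by (rule bij)
    fix x y assume xy: "x \<in> V" "y \<in> V"
    have "turan_E (2*r) r (f x) (f y) \<longleftrightarrow> hh (rep x) \<noteq> hh (rep y)"
      unfolding turan_E_def using fmod xy by auto
    also have "\<dots> \<longleftrightarrow> rep x \<noteq> rep y" using hinj repR xy using inj_on_eq_iff[OF hinj repR repR] xy by metis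
    also have "\<dots> \<longleftrightarrow> E x y" using rep_eq xy E by auto
    finally show "E x y \<longleftrightarrow> turan_E (2*r) r (f x) (f y)" by simp
  qed
qed



lemma sum_ge1_eq_card:
  fixes f :: "'b \<Rightarrow> nat"
  assumes "finite A" "\<And>a. a \<in> A \<Longrightarrow> f a \<ge> 1" "sum f A = card A" "a \<in> A"
  shows "f a = 1"
proof -
  have "sum (\<lambda>a. f a - 1) A = sum f A - sum (\<lambda>_. 1) A"
    using assms(2) by (intro sum_subtractf_nat) auto
  hence "sum (\<lambda>a. f a - 1) A = 0" using assms(3) by simp
  hence "f a - 1 = 0" using assms(1,4) by simp
  thus ?thesis using assms(2,4) by (metis diff_is_0_eq le_antisym)
qed

lemma main_unique:
  fixes V :: "'a set"
  assumes sg: "simple_graph V E" and conn: "connected_graph V E"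
    and par: "has_parameters V E (2*m) (4 * (m choose 2))" and m: "m \<ge> 2"
  shows "\<exists>q. cocktail V E q (m+1)"
proof -
  define N where "N x = nb V E x" for x
  define Cn where "Cn x = insert x (N x)" for x
  have fV: "finite V" using sg simple_graph_def by blast
  have Eprops: "x \<in> V" "y \<in> V" "x \<noteq> y" "E y x" if "E x y" for x y
    using sg_facts[OF sg that] by auto
  have Nmem: "y \<in> N x \<longleftrightarrow> E x y" for x y unfolding N_def nb_def using Eprops by auto
  have Cmem: "y \<in> Cn x \<longleftrightarrow> y = x \<or> E x y" for x y unfolding Cn_def using Nmem by auto
  have Nfin: "finite (N x)" for x unfolding N_def nb_def using fV by auto
  have Cfin: "finite (Cn x)" for x unfolding Cn_def using Nfin by auto
  have Ncard: "card (N x) = 2*m" if "x \<in> V" for x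
    using par that unfolding has_parameters_def degree_def N_def nb_def by auto
  have xnN: "x \<notin> N x" for x using Nmem Eprops by blast
  have Ccard: "card (Cn x) = 2*m+1" if "x \<in> V" for x
    unfolding Cn_def using Ncard[OF that] xnN Nfin by simp
  have CV: "Cn x \<subseteq> V" if "x \<in> V" for x using that Cmem Eprops by auto
  have NV: "N x \<subseteq> V" for x using Nmem Eprops by auto
  have sym: "card (Cn x - Cn y) = card (Cn y - Cn x)" if "x \<in> V" "y \<in> V" for x y
  proof -
    have "card (Cn x - Cn y) = card (Cn x) - card (Cn x \<inter> Cn y)"
      using Cfin by (intro card_Diff_subset_Int) auto
    moreover have "card (Cn y - Cn x) = card (Cn y) - card (Cn y \<inter> Cn x)"
      using Cfin by (intro card_Diff_subset_Int) auto
    ultimately show ?thesis using Ccard that by (simp add: Int_commute)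
  qed
  have zero: "Cn x = Cn y" if "x \<in> V" "y \<in> V" "card (Cn x - Cn y) = 0" for x y
  proof -
    have "Cn x \<subseteq> Cn y" using that(3) Cfin by auto
    thus ?thesis using Ccard that Cfin by (intro card_subset_eq) auto
  qed
  have sumT: "(\<Sum>u\<in>N v. card (Cn u - Cn v)) = 2*m" if v: "v \<in> V" for v
  proof -
    have each: "card (Cn u - Cn v) + card (N v \<inter> N u) = 2*m - 1" if u: "u \<in> N v" for u
    proof -
      have uV: "u \<in> V" using u NV by auto
      have "N u = insert v ((N u \<inter> N v) \<union> (Cn u - Cn v))"
        using u Nmem Cmem Eprops by auto
      moreover have "v \<notin> (N u \<inter> N v) \<union> (Cn u - Cn v)" using xnN Cmem by auto
      moreover have "(N u \<inter> N v) \<inter> (Cn u - Cn v) = {}" using Cmem Nmem by auto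
      moreover have "card ((N u \<inter> N v) \<union> (Cn u - Cn v)) = card (N u \<inter> N v) + card (Cn u - Cn v)"
        using calculation(3) Nfin Cfin by (intro card_Un_disjoint) auto
      ultimately have "card (N u) = 1 + card (N u \<inter> N v) + card (Cn u - Cn v)"
        using Nfin Cfin by (metis card_insert_disjoint finite_Diff finite_Int finite_Un plus_1_eq_Suc add.assoc)
      thus ?thesis using Ncard[OF uV] by (simp add: Int_commute)
    qed
    have "2 * k3_degree V E v = (\<Sum>u\<in>N v. card (N v \<inter> N u))"
      using triangle_count[OF sg v] unfolding N_def .
    moreover have "k3_degree V E v = 4 * (m choose 2)" using par v unfolding has_parameters_def by auto
    moreover have "4 * (m choose 2) = 2*(m*(m-1))"
    proof -
      have ev: "even (m*(m-1))" by auto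
      show ?thesis unfolding choose_two using ev
        by (metis dvd_mult_div_cancel mult.assoc numeral_Bit0_eq_double mult_2)
    qed
    ultimately have s2: "(\<Sum>u\<in>N v. card (N v \<inter> N u)) = 4*(m*(m-1))" by simp
    have "(\<Sum>u\<in>N v. card (Cn u - Cn v)) + (\<Sum>u\<in>N v. card (N v \<inter> N u)) = (\<Sum>u\<in>N v. 2*m - 1)"
      using each by (simp add: sum.distrib[symmetric])
    also have "\<dots> = 2*m*(2*m-1)" using Ncard[OF v] by simp
    finally have "(\<Sum>u\<in>N v. card (Cn u - Cn v)) + 4*(m*(m-1)) = 2*m*(2*m-1)" using s2 by simp
    moreover have "2*m*(2*m-1) = 4*(m*(m-1)) + 2*m" using m by (cases m) (auto simp: algebra_simps)
    ultimately show ?thesis by simp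
  qed
  have sumT': "(\<Sum>u\<in>N v. card (Cn v - Cn u)) = 2*m" if v: "v \<in> V" for v
    using sumT[OF v] sym[OF v] NV by (metis (no_types, lifting) subsetD sum.cong)
  have notw: "x = y" if xy: "x \<in> V" "y \<in> V" "Cn x = Cn y" for x y
  proof (rule ccontr)
    assume xny: "x \<noteq> y"
    define tw where "tw z = {z' \<in> V. Cn z' = Cn z}" for z
    have twfin: "finite (tw z)" for z unfolding tw_def using fV by auto
    have twself: "z \<in> tw z" if "z \<in> V" for z unfolding tw_def using that by auto
    have twC: "tw z \<subseteq> Cn z" for z unfolding tw_def using Cmem by auto
    define k where "k = Max ((\<lambda>z. card (tw z)) ` V)"
    have kmax: "card (tw z) \<le> k" if "z \<in> V" for z unfolding k_def using fV that by auto
    have "k \<in> (\<lambda>z. card (tw z)) ` V"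
      unfolding k_def using fV xy by (intro Max_in) auto
    then obtain c where c: "c \<in> V" "card (tw c) = k" by auto
    have "{x, y} \<subseteq> tw x" unfolding tw_def using xy by auto
    hence "card {x,y} \<le> card (tw x)" using twfin by (intro card_mono) auto
    hence k2: "k \<ge> 2" using kmax[OF xy(1)] xny by simp
    define S where "S = Cn c"
    define K where "K = tw c"
    have KS: "K \<subseteq> S" unfolding K_def S_def by (rule twC)
    have cK: "c \<in> K" unfolding K_def using twself c by auto
    have Kprop: "c' \<in> V \<and> Cn c' = S" if "c' \<in> K" for c'
      using that unfolding K_def tw_def S_def by auto
    have SV: "S \<subseteq> V" unfolding S_def using CV c by auto
    have fS: "finite S" using Cfin S_def by auto
    have cS: "card S = 2*m+1" unfolding S_def using Ccard c by auto
    have cardK: "card K = k" using c K_def by auto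
    have t1: "card (Cn w - S) = 1" if w: "w \<in> S - K" for w
    proof -
      have wV: "w \<in> V" using w SV by auto
      define t where "t = card (Cn w - S)"
      have t0: "t \<ge> 1"
      proof (rule ccontr)
        assume "\<not> t \<ge> 1"
        hence "Cn w = Cn c" using zero[OF wV c(1)] t_def S_def by simp
        thus False using w wV unfolding K_def tw_def by auto
      qed
      have Kw: "E w c' \<and> Cn c' = S" if "c' \<in> K" for c'
      proof -
        have "w \<in> Cn c'" "w \<noteq> c'" using Kprop[OF that] w that by auto
        thus ?thesis using Cmem Eprops Kprop[OF that] by blast
      qed
      define Y where "Y = N w - S"
      define R where "R = (N w \<inter> S) - K"
      have KN: "K \<subseteq> N w" using Kw Nmem by auto
      have splitN: "N w = K \<union> Y \<union> R" unfolding Y_def R_def using KN by auto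
      have d1: "K \<inter> Y = {}" "(K \<union> Y) \<inter> R = {}" unfolding Y_def R_def using KS by auto
      have fK: "finite K" "finite Y" "finite R" unfolding Y_def R_def
        using fS KS Nfin finite_subset by auto
      have YC: "Y = Cn w - S" unfolding Y_def Cn_def using w by auto
      have cY: "card Y = t" using YC t_def by simp
      have cN: "card (N w) = card K + card Y + card R"
        using splitN d1 fK by (simp add: card_Un_disjoint)
      define f where "f z = card (Cn w - Cn z)" for z
      have sumN: "sum f (N w) = 2*m" using sumT'[OF wV] f_def by simp
      have sN: "sum f (N w) = sum f K + sum f Y + sum f R"
        using splitN d1 fK by (simp add: sum.union_disjoint)
      have sK: "sum f K = k * t"
      proof -
        have "sum f K = sum (\<lambda>_. t) K" using Kw f_def t_def by (intro sum.cong) auto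
        thus ?thesis using cardK by simp
      qed
      have sY: "sum f Y \<ge> t * k"
      proof -
        have "f y \<ge> k" if y: "y \<in> Y" for y
        proof -
          have "K \<subseteq> Cn w - Cn y"
          proof
            fix c' assume c': "c' \<in> K"
            have "c' \<in> Cn w" using Kw[OF c'] Cmem by auto
            moreover have "c' \<notin> Cn y"
            proof
              assume "c' \<in> Cn y"
              hence "y \<in> Cn c'" using Cmem Eprops by auto
              thus False using y Kprop[OF c'] unfolding Y_def by auto
            qed
            ultimately show "c' \<in> Cn w - Cn y" by simp
          qed
          hence "card K \<le> card (Cn w - Cn y)" using Cfin by (intro card_mono) auto
          thus ?thesis using cardK f_def by simp
        qed
        hence "sum (\<lambda>_. k) Y \<le> sum f Y" by (intro sum_mono) auto
        thus ?thesis using cY by (simp add: mult.commute)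
      qed
      have sR: "sum f R + (k - 1) \<ge> card R"
      proof -
        have "sum f (R - tw w) \<le> sum f R" using fK by (intro sum_mono2) auto
        moreover have "card (R - tw w) \<le> sum f (R - tw w)"
        proof -
          have "f z \<ge> 1" if z: "z \<in> R - tw w" for z
          proof (rule ccontr)
            assume "\<not> f z \<ge> 1"
            hence "card (Cn w - Cn z) = 0" using f_def by simp
            moreover have zV: "z \<in> V" using z NV unfolding R_def by auto
            ultimately have "Cn w = Cn z" using zero wV by blast
            thus False using z zV unfolding tw_def by auto
          qed
          hence "sum (\<lambda>_. 1) (R - tw w) \<le> sum f (R - tw w)" by (intro sum_mono) auto
          thus ?thesis by simp
        qed
        moreover have "card (R - tw w) = card R - card (R \<inter> tw w)"
          using fK by (intro card_Diff_subset_Int) auto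
        moreover have "card (R \<inter> tw w) \<le> k - 1"
        proof -
          have "R \<inter> tw w \<subseteq> tw w - {w}" using xnN unfolding R_def by auto
          hence "card (R \<inter> tw w) \<le> card (tw w - {w})" using twfin by (intro card_mono) auto
          also have "\<dots> = card (tw w) - 1" using twself[OF wV] twfin by simp
          finally show ?thesis using kmax[OF wV] by simp
        qed
        ultimately show ?thesis by linarith
      qed
      have cNw: "card K + card Y + card R = 2*m" using cN Ncard[OF wV] by simp
      have "t \<le> 1"
      proof (rule ccontr)
        assume "\<not> t \<le> 1"
        hence t2: "t \<ge> 2" by simp
        have p1: "k * t \<ge> k * 2" using t2 by (intro mult_le_mono2)
        have p2: "k * t \<ge> 2 * t" using k2 by (intro mult_le_mono1)
        have tk: "t * k = k * t" by (rule mult.commute)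
        show False using p1 p2 sumN sN sK sY sR cNw cY cardK k2 t2 tk by linarith
      qed
      thus ?thesis using t0 t_def by simp
    qed
    have NcS: "N c = (K - {c}) \<union> (S - K)" using KS cK xnN unfolding S_def Cn_def by auto
    have "(\<Sum>z\<in>N c. card (Cn c - Cn z)) = 2*m" using sumT'[OF c(1)] .
    moreover have "(\<Sum>z\<in>N c. card (Cn c - Cn z)) = (\<Sum>z\<in>K - {c}. card (Cn c - Cn z)) + (\<Sum>z\<in>S - K. card (Cn c - Cn z))"
      unfolding NcS using fS KS finite_subset by (intro sum.union_disjoint) auto
    moreover have "(\<Sum>z\<in>K - {c}. card (Cn c - Cn z)) = 0" using Kprop S_def by simp
    moreover have "(\<Sum>z\<in>S - K. card (Cn c - Cn z)) = (\<Sum>z\<in>S - K. 1)"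
    proof (intro sum.cong refl)
      fix z assume z: "z \<in> S - K"
      have "card (Cn c - Cn z) = card (Cn z - Cn c)" using sym c(1) z SV by auto
      thus "card (Cn c - Cn z) = 1" using t1[OF z] S_def by simp
    qed
    moreover have "card (S - K) = 2*m + 1 - k" using KS fS cS cardK by (simp add: card_Diff_subset finite_subset)
    ultimately show False using k2 m by simp
  qed
  have one: "card (Cn u - Cn v) = 1" if uv: "E u v" for u v
  proof -
    have vV: "v \<in> V" using Eprops[OF uv] by auto
    have ge: "card (Cn z - Cn v) \<ge> 1" if z: "z \<in> N v" for z
    proof (rule ccontr)
      assume "\<not> card (Cn z - Cn v) \<ge> 1"
      moreover have "z \<in> V" using z NV by auto
      ultimately have "Cn z = Cn v" using zero[of z v] vV by simp
      hence "z = v" using notw[of z v] vV \<open>z \<in> V\<close> by simp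
      thus False using z xnN by auto
    qed
    have "u \<in> N v" using uv Nmem Eprops by auto
    thus ?thesis using sum_ge1_eq_card[OF Nfin ge, of v] sumT[OF vV] Ncard[OF vV] by auto
  qed
  have single: "\<exists>a. A = {a}" if "card A = 1" for A :: "'a set"
    using that card_1_singletonE by blast
  have smem: "a = b" if "card A = 1" "a \<in> A" "b \<in> A" for A :: "'a set" and a b
    using that card_1_singletonE by (metis singletonD)
  obtain v where v: "v \<in> V" using conn unfolding connected_graph_def by auto
  have "N v \<noteq> {}" using Ncard[OF v] m by auto
  then obtain u0 where u0: "u0 \<in> N v" by auto
  have Euv: "E u0 v" "E v u0" using u0 Nmem Eprops by auto
  obtain w where w: "Cn u0 - Cn v = {w}" using single one[OF Euv(1)] by blast
  obtain p where p: "Cn v - Cn u0 = {p}" using single one[OF Euv(2)] by blast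
  have adj: "E w' z" if uN: "u \<in> N v" and ww: "Cn u - Cn v = {w'}" and pp: "Cn v - Cn u = {p'}"
     and z: "z \<in> N v" "z \<noteq> u" "z \<noteq> p'" for u w' p' z
  proof -
    have Euv': "E u v" using uN Nmem Eprops by auto
    have zu: "z \<in> Cn u" using z pp Cn_def by auto
    have w'Cu: "w' \<in> Cn u" "w' \<notin> Cn v" using ww by auto
    have Euw: "E u w'" using w'Cu Cmem uN Cn_def by auto
    have vin: "v \<in> Cn u - Cn w'" using Euv' w'Cu Cmem Eprops by auto
    obtain a where a: "Cn u - Cn w' = {a}" using single[OF one[OF Euw]] by blast
    have "Cn u - Cn w' = {v}" using a vin by auto
    moreover have "z \<noteq> v" using z(1) xnN[of v] by auto
    ultimately have "z \<in> Cn w'" using zu by blast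
    moreover have "z \<noteq> w'" using z w'Cu Cn_def by auto
    ultimately show ?thesis using Cmem by auto
  qed
  have pin: "p \<in> Cn v" "p \<notin> Cn u0" using p by auto
  have "v \<in> Cn u0" using Euv Cmem by auto
  hence "p \<noteq> v" using pin by auto
  hence pN: "p \<in> N v" "\<not> E u0 p" "p \<noteq> u0" using pin Cmem unfolding Cn_def by auto
  have Epv: "E p v" using pN Nmem Eprops by auto
  obtain w' where w': "Cn p - Cn v = {w'}" using single one[OF Epv] by blast
  have pu: "Cn v - Cn p = {u0}"
  proof -
    have "u0 \<in> Cn v - Cn p" using u0 pN Cn_def Cmem Eprops Nmem by auto
    moreover obtain a where "Cn v - Cn p = {a}" using single[OF one[OF Eprops(4)[OF Epv]]] by blast
    ultimately show ?thesis by auto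
  qed
  have "card (N v - {u0, p}) \<ge> card (N v) - card {u0, p}" by (rule diff_card_le_card_Diff) simp
  moreover have "card {u0, p} \<le> 2" by (simp add: card_insert_le_m1)
  ultimately have "card (N v - {u0, p}) > 0" using Ncard[OF v] m by linarith
  then obtain z where z: "z \<in> N v" "z \<noteq> u0" "z \<noteq> p" by (auto simp: card_gt_0_iff)
  have Ewz: "E w z" using adj[OF u0 w p z] .
  have Ew'z: "E w' z" using adj[OF pN(1) w' pu] z by auto
  have ww': "w' = w"
  proof -
    have Ezv: "E z v" using z Nmem Eprops by auto
    have "w \<in> Cn z - Cn v" "w' \<in> Cn z - Cn v" using Ewz Ew'z w w' Cmem Eprops by auto
    thus ?thesis using smem[OF one[OF Ezv]] by blast
  qed
  have wV: "w \<in> V" "w \<notin> Cn v" using w CV[OF Eprops(1)[OF Euv(1)]] by auto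
  have "N v \<subseteq> N w"
  proof
    fix x assume x: "x \<in> N v"
    show "x \<in> N w"
    proof (cases "x = u0 \<or> x = p")
      case True
      have wi: "w \<in> Cn u0" "w \<notin> Cn v" "w' \<in> Cn p" "w' \<notin> Cn v" using w w' by auto
      have "u0 \<in> Cn v" "p \<in> Cn v" using u0 pN unfolding Cn_def by auto
      hence "w \<noteq> u0" "w' \<noteq> p" using wi by auto
      hence "E u0 w" "E p w" using wi ww' Cmem by auto
      thus ?thesis using True Nmem Eprops by auto
    next
      case False thus ?thesis using adj[OF u0 w p x] Nmem by auto
    qed
  qed
  hence Nw: "N w = N v" using Ncard[OF v] Ncard[OF wV(1)] Nfin
    by (metis card_subset_eq)
  define S where "S = insert w (Cn v)"
  have closed: "y \<in> S" if xS: "x \<in> S" and Exy: "E x y" for x y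
  proof -
    consider "x = w" | "x = v" | "x \<in> N v" using xS S_def Cn_def by auto
    thus ?thesis
    proof cases
      case 1 thus ?thesis using Exy Nw Nmem S_def Cn_def by auto
    next
      case 2 thus ?thesis using Exy Nmem S_def Cn_def by auto
    next
      case 3
      show ?thesis
      proof (rule ccontr)
        assume yS: "y \<notin> S"
        have Exv: "E x v" using 3 Nmem Eprops by auto
        have "x \<in> N w" using 3 Nw by simp
        hence "E x w" using Nmem Eprops by blast
        hence "w \<in> Cn x - Cn v" using Cmem wV by auto
        moreover have "y \<in> Cn x - Cn v" using yS Exy Cmem S_def by auto
        ultimately have "y = w" using smem[OF one[OF Exv]] by blast
        thus False using yS S_def by auto
      qed
    qed
  qed
  have reach: "y \<in> S" if "E\<^sup>*\<^sup>* v y" for y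
    using that
  proof (induction rule: rtranclp_induct)
    case base thus ?case using S_def Cn_def by auto
  next
    case (step y z) thus ?case using closed by blast
  qed
  have VS: "V = S"
  proof
    show "V \<subseteq> S" using conn reach v unfolding connected_graph_def by auto
    show "S \<subseteq> V" using S_def CV[OF v] wV by auto
  qed
  have cV: "card V = 2*m+2" using VS S_def wV Ccard[OF v] Cfin by simp
  define q where "q x = (SOME y. y \<in> V - Cn x)" for x
  have qx: "V - Cn x = {q x}" if x: "x \<in> V" for x
  proof -
    have "card (V - Cn x) = 1" using cV Ccard[OF x] CV[OF x] Cfin by (simp add: card_Diff_subset)
    then obtain a where a: "V - Cn x = {a}" using single by blast
    hence "q x = a" unfolding q_def by simp
    thus ?thesis using a by simp
  qed
  show ?thesis
  proof (rule exI[of _ q])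
    show "cocktail V E q (m+1)" unfolding cocktail_def
    proof (intro conjI ballI allI)
      show "finite V" by (rule fV)
      show "card V = 2*(m+1)" using cV by simp
      fix x assume x: "x \<in> V"
      have qq: "q x \<in> V" "q x \<notin> Cn x" using qx[OF x] by auto
      show "q x \<in> V" using qq by simp
      show "q x \<noteq> x" using qq Cmem by auto
      have "x \<in> V - Cn (q x)" using x qq Cmem Eprops by auto
      thus "q (q x) = x" using qx[OF qq(1)] by auto
    next
      fix x y
      show "E x y \<longleftrightarrow> x \<in> V \<and> y \<in> V \<and> x \<noteq> y \<and> y \<noteq> q x"
      proof
        assume Exy: "E x y"
        thus "x \<in> V \<and> y \<in> V \<and> x \<noteq> y \<and> y \<noteq> q x" using Eprops[OF Exy] qx[of x] Cmem by auto
      next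
        assume h: "x \<in> V \<and> y \<in> V \<and> x \<noteq> y \<and> y \<noteq> q x"
        hence "y \<in> Cn x" using qx[of x] by auto
        thus "E x y" using h Cmem by auto
      qed
    qed
  qed
qed


theorem corollary5p3:
  fixes m :: nat
  assumes "m \<ge> 2"
  shows "simple_graph (turan_V (2*m+2) (m+1)) (turan_E (2*m+2) (m+1))
       \<and> connected_graph (turan_V (2*m+2) (m+1)) (turan_E (2*m+2) (m+1))
       \<and> has_parameters (turan_V (2*m+2) (m+1)) (turan_E (2*m+2) (m+1)) (2*m) (4 * (m choose 2))
       \<and> (\<forall>(V :: 'a set) E. simple_graph V E \<and> connected_graph V E
            \<and> has_parameters V E (2*m) (4 * (m choose 2))
            \<longrightarrow> graph_iso V E (turan_V (2*m+2) (m+1)) (turan_E (2*m+2) (m+1)))"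
proof -
  have eq: "2*m+2 = 2*(m+1)" by simp
  have c: "cocktail (turan_V (2*m+2) (m+1)) (turan_E (2*m+2) (m+1)) (\<lambda>i. (i + (m+1)) mod (2*m+2)) (m+1)"
    by (rule turan_cocktail) (auto simp: eq)
  have u: "graph_iso V E (turan_V (2*m+2) (m+1)) (turan_E (2*m+2) (m+1))"
    if H: "simple_graph V E" "connected_graph V E" "has_parameters V E (2*m) (4 * (m choose 2))"
    for V :: "'a set" and E
  proof -
    obtain q where "cocktail V E q (m+1)" using main_unique[OF H assms] by blast
    from cocktail_iso[OF this] show ?thesis unfolding turan_V_def eq by simp
  qed
  show ?thesis using cocktail_simple[OF c] cocktail_connected[OF c] cocktail_params[OF c] u assms
    by auto
qed

end
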